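(* Let $W=V/\operatorname{Im}u$, $\zeta:V\to W$ the projection, $W_q=\zeta(\ker u^q)$ for $q\ge0$, and $P=\{g\in GL(W):g(W_q)=W_q\ \forall q\}$. Let $Z(u)=\{g\in GL(V):gu=ug\}$ and let $\varphi:Z(u)\to GL(W)$ be the morphism of algebraic groups sending $g$ to the induced map on $W$ (its image lies in $P$). Then there is a morphism of algebraic groups $\psi:P\to Z(u)$ such that $\varphi\circ\psi=\mathrm{id}_P$.
   Context: $V$ is a finite-dimensional complex vector space and $u:V\to V$ is nilpotent. *)

theory Defs
  imports "HOL-Analysis.Analysis"
begin

definition mpow :: "complex^'n^'n \<Rightarrow> nat \<Rightarrow> complex^'n^'n" where
  "mpow A q = (((**) A) ^^ q) (mat 1)"

definition nilpotent_mat :: "complex^'n^'n \<Rightarrow> bool" where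
  "nilpotent_mat A \<longleftrightarrow> (\<exists>k. mpow A k = 0)"

inductive_set polyfun :: "(complex^'m^'m \<Rightarrow> complex) set" where
  pf_const: "(\<lambda>g. c) \<in> polyfun"
| pf_coord: "(\<lambda>g. g $ i $ j) \<in> polyfun"
| pf_add: "p \<in> polyfun \<Longrightarrow> q \<in> polyfun \<Longrightarrow> (\<lambda>g. p g + q g) \<in> polyfun"
| pf_mult: "p \<in> polyfun \<Longrightarrow> q \<in> polyfun \<Longrightarrow> (\<lambda>g. p g * q g) \<in> polyfun"

text \<open>A map f from a subset S of GL_m to n x n matrices is regular (a morphism of
  varieties) if each entry is a regular function on GL_m, i.e. of the form
  p(g) / det(g)^k with p polynomial, restricted to S.\<close>
definition regular_on :: "(complex^'m^'m) set \<Rightarrow> (complex^'m^'m \<Rightarrow> complex^'n^'n) \<Rightarrow> bool" where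
  "regular_on S f \<longleftrightarrow> (\<forall>i j. \<exists>p\<in>polyfun. \<exists>k::nat. \<forall>g\<in>S. f g $ i $ j = p g / det g ^ k)"

definition alg_group_hom :: "(complex^'m^'m) set \<Rightarrow> (complex^'n^'n) set \<Rightarrow> (complex^'m^'m \<Rightarrow> complex^'n^'n) \<Rightarrow> bool" where
  "alg_group_hom S T f \<longleftrightarrow> (\<forall>g\<in>S. f g \<in> T) \<and> (\<forall>g\<in>S. \<forall>h\<in>S. f (g ** h) = f g ** f h)
     \<and> regular_on S f"

text \<open>W = V / Im u realised by a surjective linear map zeta : V -> W with kernel Im u.\<close>
definition is_quotient_by_image :: "complex^'n^'n \<Rightarrow> complex^'n^'m \<Rightarrow> bool" where
  "is_quotient_by_image u \<zeta> \<longleftrightarrow> range ((*v) \<zeta>) = UNIV \<and> {v. \<zeta> *v v = 0} = range ((*v) u)"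

definition Wq :: "complex^'n^'n \<Rightarrow> complex^'n^'m \<Rightarrow> nat \<Rightarrow> (complex^'m) set" where
  "Wq u \<zeta> q = (*v) \<zeta> ` {v. mpow u q *v v = 0}"

definition Pgrp :: "complex^'n^'n \<Rightarrow> complex^'n^'m \<Rightarrow> (complex^'m^'m) set" where
  "Pgrp u \<zeta> = {g. invertible g \<and> (\<forall>q. (*v) g ` Wq u \<zeta> q = Wq u \<zeta> q)}"

definition centralizer :: "complex^'n^'n \<Rightarrow> (complex^'n^'n) set" where
  "centralizer u = {g. invertible g \<and> g ** u = u ** g}"

definition induced_map :: "complex^'n^'m \<Rightarrow> complex^'n^'n \<Rightarrow> complex^'m^'m" where
  "induced_map \<zeta> g = (THE h. h ** \<zeta> = \<zeta> ** g)"

end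

theory Submission
  imports Defs
begin

lemma lift_exists:
  fixes A :: "complex^'a^'b" and F :: "nat \<Rightarrow> (complex^'a) set"
  assumes sub: "\<And>q. vec.subspace (F q)"
  and mono: "\<And>p q. p \<le> q \<Longrightarrow> F p \<subseteq> F q"
  and stab: "\<And>p. p \<ge> N \<Longrightarrow> (*v) A ` F p = (*v) A ` F N"
  shows "\<exists>S :: complex^'b^'a. \<forall>q. \<forall>y \<in> (*v) A ` F q. A *v (S *v y) = y \<and> S *v y \<in> F q"
proof -
  define G where "G q = (*v) A ` F q" for q
  have Gsub: "vec.subspace (G q)" for q unfolding G_def by (rule vec.subspace_image[OF sub])
  have Gmono: "p \<le> q \<Longrightarrow> G p \<subseteq> G q" for p q unfolding G_def using mono by blast
  have step: "\<exists>B. vec.independent B \<and> B \<subseteq> G q \<and> (\<forall>p\<le>q. G p \<subseteq> vec.span (B \<inter> G p))" for q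
  proof (induction q)
    case 0
    obtain B where "{} \<subseteq> B" "B \<subseteq> G 0" "vec.independent B" "G 0 \<subseteq> vec.span B"
      using vec.maximal_independent_subset_extend[of "{}" "G 0"] vec.independent_empty by auto
    then show ?case by (intro exI[of _ B]) (auto simp: Int_absorb2)
  next
    case (Suc q)
    then obtain B where B: "vec.independent B" "B \<subseteq> G q" "\<forall>p\<le>q. G p \<subseteq> vec.span (B \<inter> G p)" by blast
    have "B \<subseteq> G (Suc q)" using B(2) Gmono[of q "Suc q"] by auto
    then obtain B' where B': "B \<subseteq> B'" "B' \<subseteq> G (Suc q)" "vec.independent B'" "G (Suc q) \<subseteq> vec.span B'"
      using vec.maximal_independent_subset_extend[of B "G (Suc q)"] B(1) by auto
    have sp: "\<forall>p\<le>Suc q. G p \<subseteq> vec.span (B' \<inter> G p)"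
    proof (intro allI impI)
      fix p assume "p \<le> Suc q"
      then show "G p \<subseteq> vec.span (B' \<inter> G p)"
      proof (cases "p = Suc q")
        case True then show ?thesis using B' by (simp add: Int_absorb2)
      next
        case False
        then have "p \<le> q" using \<open>p \<le> Suc q\<close> by simp
        then have "G p \<subseteq> vec.span (B \<inter> G p)" using B(3) by blast
        also have "\<dots> \<subseteq> vec.span (B' \<inter> G p)" using B'(1) by (intro vec.span_mono) blast
        finally show ?thesis .
      qed
    qed
    show ?case by (rule exI[of _ B']) (simp add: B'(2) B'(3) sp)
  qed
  then obtain B where B: "vec.independent B" "B \<subseteq> G N" "\<forall>p\<le>N. G p \<subseteq> vec.span (B \<inter> G p)" by blast
  have Bspan: "G p \<subseteq> vec.span (B \<inter> G p)" for p
  proof (cases "p \<le> N")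
    case True show ?thesis using B(3)[rule_format, OF True] .
  next
    case False
    then have "G p = G N" unfolding G_def by (intro stab) simp
    moreover have "G N \<subseteq> vec.span (B \<inter> G N)" using B(3)[rule_format, OF order_refl] .
    ultimately show ?thesis by (simp only:)
  qed
  define d where "d b = (LEAST p. b \<in> G p)" for b
  define f where "f b = (SOME v. v \<in> F (d b) \<and> A *v v = b)" for b
  have f: "f b \<in> F (d b) \<and> A *v f b = b" if "b \<in> B" for b
  proof -
    have "b \<in> G (d b)" unfolding d_def using that B(2) by (intro LeastI) auto
    then have "\<exists>v. v \<in> F (d b) \<and> A *v v = b" unfolding G_def by auto
    then show ?thesis unfolding f_def by (rule someI_ex)
  qed
  obtain h where h: "Vector_Spaces.linear (*s) (*s) h" "\<forall>x\<in>B. h x = f x"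
    using vec.linear_independent_extend[OF B(1)] by blast
  define S where "S = matrix h"
  have Sh: "S *v x = h x" for x unfolding S_def by (rule matrix_works[OF h(1)])
  have "\<forall>q. \<forall>y \<in> G q. A *v (S *v y) = y \<and> S *v y \<in> F q"
  proof (intro allI ballI conjI)
    fix q y assume y: "y \<in> G q"
    then have ys: "y \<in> vec.span (B \<inter> G q)" using Bspan by blast
    have "(A ** S) *v y = id y"
    proof (rule vec.linear_eq_on[OF _ _ ys])
      show "Vector_Spaces.linear (*s) (*s) ((*v) (A ** S))" by simp
      show "Vector_Spaces.linear (*s) (*s) id" by (rule vec.linear_id)
      fix b assume "b \<in> B \<inter> G q"
      then show "(A ** S) *v b = id b" using f h(2) Sh by (simp add: matrix_vector_mul_assoc[symmetric])
    qed
    then show "A *v (S *v y) = y" by (simp add: matrix_vector_mul_assoc)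
    have "(*v) S ` (B \<inter> G q) \<subseteq> F q"
    proof
      fix x assume "x \<in> (*v) S ` (B \<inter> G q)"
      then obtain b where b: "b \<in> B" "b \<in> G q" "x = S *v b" by auto
      have "d b \<le> q" unfolding d_def using b by (intro Least_le) 
      then have "F (d b) \<subseteq> F q" by (rule mono)
      then show "x \<in> F q" using f[OF b(1)] b h(2) Sh by auto
    qed
    then have "vec.span ((*v) S ` (B \<inter> G q)) \<subseteq> F q" using sub by (intro vec.span_minimal)
    then show "S *v y \<in> F q" using ys vec.span_image[of S "B \<inter> G q"] by auto
  qed
  then show ?thesis unfolding G_def by blast
qed

lemma mpow_0[simp]: "mpow A 0 = mat 1" by (simp add: mpow_def)
lemma mpow_Suc: "mpow A (Suc q) = A ** mpow A q" by (simp add: mpow_def)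
lemma mpow_add: "mpow A (p + q) = mpow A p ** mpow A q"
  by (induction p) (simp_all add: mpow_Suc matrix_mul_assoc)
lemma mpow_Suc': "mpow A (Suc q) = mpow A q ** A"
  using mpow_add[of A q 1] by (simp add: mpow_Suc)
lemma mpow_Suc_v: "mpow A (Suc q) *v x = A *v (mpow A q *v x)"
  by (simp add: mpow_Suc matrix_vector_mul_assoc)
lemma mpow_Suc_v': "mpow A (Suc q) *v x = mpow A q *v (A *v x)"
  by (simp add: mpow_Suc' matrix_vector_mul_assoc)

lemma sum_mv: "(sum M S) *v (v::'a::semiring_1^'n) = (\<Sum>l\<in>S. M l *v v)"
  by (induct S rule: infinite_finite_induct) (simp_all add: matrix_vector_mult_add_rdistrib)

lemma pf_sum: "finite A \<Longrightarrow> (\<And>x. x \<in> A \<Longrightarrow> f x \<in> polyfun) \<Longrightarrow> (\<lambda>g. \<Sum>x\<in>A. f x g) \<in> polyfun"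
proof (induction A rule: finite_induct)
  case empty
  then show ?case using pf_const[of 0] by simp
next
  case (insert x F)
  then show ?case using pf_add[of "f x" "\<lambda>g. \<Sum>x\<in>F. f x g"] by simp
qed

lemma uniq:
  fixes u :: "complex^'n^'n" and \<zeta> :: "complex^'n^'m" and S :: "complex^'m^'n"
  assumes quot: "is_quotient_by_image u \<zeta>"
  and ZS: "\<And>y. \<zeta> *v (S *v y) = y"
  and SK: "\<And>q y. y \<in> Wq u \<zeta> q \<Longrightarrow> mpow u q *v (S *v y) = 0"
  shows "mpow u q *v (\<Sum>l<k. mpow u l *v (S *v a l)) = 0 \<Longrightarrow> l < k \<Longrightarrow> a l \<in> Wq u \<zeta> (l + q)"
proof (induction k arbitrary: q a l)
  case 0 thus ?case by simp
next
  case (Suc k)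
  define y where "y = (\<Sum>l<k. mpow u l *v (S *v a (Suc l)))"
  have v: "(\<Sum>l<Suc k. mpow u l *v (S *v a l)) = S *v a 0 + u *v y"
    unfolding y_def sum.lessThan_Suc_shift by (simp add: mpow_Suc_v vec.sum)
  have Zu: "\<zeta> *v (u *v x) = 0" for x
    using quot unfolding is_quotient_by_image_def by (metis (mono_tags, lifting) mem_Collect_eq rangeI)
  have a0: "\<zeta> *v (\<Sum>l<Suc k. mpow u l *v (S *v a l)) = a 0"
    unfolding v by (simp add: matrix_vector_right_distrib ZS Zu)
  have "a 0 \<in> Wq u \<zeta> q" unfolding Wq_def
    using Suc.prems(1) a0[symmetric] by blast
  then have s0: "mpow u q *v (S *v a 0) = 0" by (rule SK)
  have "mpow u (Suc q) *v y = mpow u q *v (u *v y)" by (simp add: mpow_Suc_v')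
  also have "\<dots> = mpow u q *v (\<Sum>l<Suc k. mpow u l *v (S *v a l)) - mpow u q *v (S *v a 0)"
    unfolding v by (simp add: matrix_vector_right_distrib)
  also have "\<dots> = 0" using Suc.prems(1) s0 by simp
  finally have yK: "mpow u (Suc q) *v y = 0" .
  show ?case
  proof (cases l)
    case 0 then show ?thesis using \<open>a 0 \<in> Wq u \<zeta> q\<close> by simp
  next
    case (Suc l')
    then have "l' < k" using Suc.prems(2) by simp
    from Suc.IH[of "Suc q" "\<lambda>i. a (Suc i)", OF yK[unfolded y_def] this]
    show ?thesis using Suc by simp
  qed
qed

lemma wd:
  fixes u :: "complex^'n^'n" and \<zeta> :: "complex^'n^'m" and S :: "complex^'m^'n"
  assumes quot: "is_quotient_by_image u \<zeta>"
  and ZS: "\<And>y. \<zeta> *v (S *v y) = y"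
  and SK: "\<And>q y. y \<in> Wq u \<zeta> q \<Longrightarrow> mpow u q *v (S *v y) = 0"
  and g: "\<And>q. (*v) g ` Wq u \<zeta> q \<subseteq> Wq u \<zeta> q"
  and eq: "(\<Sum>l<k. mpow u l *v (S *v a l)) = (\<Sum>l<k. mpow u l *v (S *v b l))"
  shows "(\<Sum>l<k. mpow u l *v (S *v (g *v a l))) = (\<Sum>l<k. mpow u l *v (S *v (g *v b l)))"
proof -
  have "mpow u 0 *v (\<Sum>l<k. mpow u l *v (S *v (a l - b l))) = 0"
    using eq by (simp add: matrix_vector_mult_diff_distrib sum_subtractf)
  then have ab: "l < k \<Longrightarrow> a l - b l \<in> Wq u \<zeta> l" for l
    using uniq[OF quot ZS SK, where q=0 and k=k and a="\<lambda>l. a l - b l" and l=l] by simp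
  have "(\<Sum>l<k. mpow u l *v (S *v (g *v a l))) - (\<Sum>l<k. mpow u l *v (S *v (g *v b l)))
      = (\<Sum>l<k. mpow u l *v (S *v (g *v (a l - b l))))"
    by (simp add: matrix_vector_mult_diff_distrib sum_subtractf)
  also have "\<dots> = 0"
  proof (rule sum.neutral, rule ballI)
    fix l assume "l \<in> {..<k}"
    then have "g *v (a l - b l) \<in> Wq u \<zeta> l" using ab g by blast
    then show "mpow u l *v (S *v (g *v (a l - b l))) = 0" by (rule SK)
  qed
  finally show ?thesis by simp
qed

theorem lemma3p6:
  fixes u :: "complex^'n^'n" and \<zeta> :: "complex^'n^'m"
  assumes "nilpotent_mat u"
    and "is_quotient_by_image u \<zeta>"
  shows "\<exists>\<psi>. alg_group_hom (Pgrp u \<zeta>) (centralizer u) \<psi>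
           \<and> (\<forall>g\<in>Pgrp u \<zeta>. induced_map \<zeta> (\<psi> g) = g)"
proof -
  note quot = assms(2)
  obtain N0 where N0: "mpow u N0 = 0" using assms(1) unfolding nilpotent_mat_def by blast
  define N where "N = Suc N0"
  have uN: "mpow u p = 0" if "p \<ge> N0" for p
  proof -
    have "mpow u p = mpow u (p - N0 + N0)" using that by simp
    also have "\<dots> = 0" unfolding mpow_add N0 by simp
    finally show ?thesis .
  qed
  have surjZ: "range ((*v) \<zeta>) = UNIV" and kerZ: "{v. \<zeta> *v v = 0} = range ((*v) u)"
    using quot unfolding is_quotient_by_image_def by auto
  have Zu: "\<zeta> *v (u *v x) = 0" for x using kerZ by auto
  define K where "K q = {v. mpow u q *v v = 0}" for q
  have Ksub: "vec.subspace (K q)" for q unfolding K_def by (rule vec.subspace_kernel)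
  have Kmono: "K p \<subseteq> K q" if "p \<le> q" for p q
  proof
    fix v assume "v \<in> K p"
    have "mpow u q = mpow u (q - p + p)" using that by simp
    then have "mpow u q = mpow u (q - p) ** mpow u p" by (simp add: mpow_add)
    then show "v \<in> K q" using \<open>v \<in> K p\<close> unfolding K_def
      by (simp add: matrix_vector_mul_assoc[symmetric])
  qed
  have Kfull: "K p = UNIV" if "p \<ge> N0" for p unfolding K_def using uN[OF that] by simp
  have WK: "Wq u \<zeta> q = (*v) \<zeta> ` K q" for q unfolding Wq_def K_def ..
  have "\<exists>S :: complex^'m^'n. \<forall>q. \<forall>y \<in> (*v) \<zeta> ` K q. \<zeta> *v (S *v y) = y \<and> S *v y \<in> K q"
    by (rule lift_exists[where N=N0]) (use Ksub Kmono Kfull in auto)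
  then obtain S :: "complex^'m^'n" where S: "\<forall>q. \<forall>y \<in> (*v) \<zeta> ` K q. \<zeta> *v (S *v y) = y \<and> S *v y \<in> K q"
    by blast
  have ZS: "\<zeta> *v (S *v y) = y" for y
    using S Kfull[of N0] surjZ by (metis UNIV_I order_refl)
  have SK: "mpow u q *v (S *v y) = 0" if "y \<in> Wq u \<zeta> q" for q y
    using S that unfolding WK K_def by blast
  have "\<exists>R :: complex^'n^'n. \<forall>q. \<forall>y \<in> (*v) u ` (\<lambda>_. UNIV) q. u *v (R *v y) = y \<and> R *v y \<in> (\<lambda>_. UNIV) q"
    using lift_exists[where F="\<lambda>_. UNIV" and N=0 and A=u] by (simp add: vec.subspace_UNIV)
  then obtain R :: "complex^'n^'n" where R0: "\<forall>q. \<forall>y\<in>range ((*v) u). u *v (R *v y) = y \<and> R *v y \<in> UNIV"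
    by (elim exE)
  have R: "u *v (R *v y) = y" if "y \<in> range ((*v) u)" for y using R0 that by auto
  define T where "T = R ** (mat 1 - S ** \<zeta>)"
  have uT: "u *v (T *v v) = v - S *v (\<zeta> *v v)" for v
  proof -
    define x where "x = v - S *v (\<zeta> *v v)"
    have "\<zeta> *v x = 0" unfolding x_def by (simp add: matrix_vector_mult_diff_distrib ZS)
    then have "x \<in> range ((*v) u)" using kerZ by auto
    then have "u *v (R *v x) = x" by (rule R)
    moreover have "T *v v = R *v x" unfolding T_def x_def
      by (simp add: matrix_vector_mul_assoc[symmetric] matrix_vector_mult_diff_rdistrib)
    ultimately show ?thesis unfolding x_def by simp
  qed
  define c where "c l v = \<zeta> *v (mpow T l *v v)" for l v
  have dec_gen: "v = (\<Sum>l<k. mpow u l *v (S *v c l v)) + mpow u k *v (mpow T k *v v)" for k v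
  proof (induction k)
    case 0 then show ?case by simp
  next
    case (Suc k)
    define x where "x = mpow T k *v v"
    have "mpow u k *v x = mpow u k *v (S *v (\<zeta> *v x)) + mpow u k *v (u *v (T *v x))"
      by (simp add: uT matrix_vector_right_distrib[symmetric])
    also have "\<dots> = mpow u k *v (S *v c k v) + mpow u (Suc k) *v (mpow T (Suc k) *v v)"
      unfolding x_def c_def mpow_Suc_v[of T] mpow_Suc_v'[of u] by simp
    finally show ?case using Suc unfolding x_def by (simp add: add.assoc)
  qed
  have dec: "v = (\<Sum>l<N. mpow u l *v (S *v c l v))" for v
    using dec_gen[of v N] uN[of N] unfolding N_def by simp
  define P where "P l = mpow u l ** S" for l
  define Q where "Q l = \<zeta> ** mpow T l" for l
  define \<psi> where "\<psi> g = (\<Sum>l<N. (P l ** g) ** Q l)" for g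
  have \<psi>v: "\<psi> g *v v = (\<Sum>l<N. mpow u l *v (S *v (g *v c l v)))" for g v
    by (simp add: \<psi>_def sum_mv c_def P_def Q_def matrix_vector_mul_assoc matrix_mul_assoc)
  have Pimg: "(*v) g ` Wq u \<zeta> q \<subseteq> Wq u \<zeta> q" if "g \<in> Pgrp u \<zeta>" for g q
    using that unfolding Pgrp_def by auto
  have wd': "(\<Sum>l<k. mpow u l *v (S *v (g *v a l))) = (\<Sum>l<k. mpow u l *v (S *v (g *v b l)))"
    if "g \<in> Pgrp u \<zeta>" "(\<Sum>l<k. mpow u l *v (S *v a l)) = (\<Sum>l<k. mpow u l *v (S *v b l))"
    for g k a b
    by (rule wd[OF quot ZS SK Pimg[OF that(1)] that(2)])
  have hom: "\<psi> g ** \<psi> h = \<psi> (g ** h)" if g: "g \<in> Pgrp u \<zeta>" for g h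
  proof -
    have "\<psi> g *v (\<psi> h *v v) = \<psi> (g ** h) *v v" for v
    proof -
      define x where "x = \<psi> h *v v"
      have "(\<Sum>l<N. mpow u l *v (S *v c l x)) = (\<Sum>l<N. mpow u l *v (S *v (h *v c l v)))"
        using dec[of x] \<psi>v[of h v] unfolding x_def by simp
      then have "(\<Sum>l<N. mpow u l *v (S *v (g *v c l x))) = (\<Sum>l<N. mpow u l *v (S *v (g *v (h *v c l v))))"
        by (rule wd'[OF g])
      then have "\<psi> g *v x = \<psi> (g ** h) *v v"
        by (simp only: \<psi>v matrix_vector_mul_assoc)
      then show ?thesis unfolding x_def .
    qed
    then show ?thesis by (simp add: matrix_eq matrix_vector_mul_assoc)
  qed
  have one: "\<psi> (mat 1) = mat 1"
    using dec by (simp add: matrix_eq \<psi>v)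
  have comm: "\<psi> g ** u = u ** \<psi> g" if g: "g \<in> Pgrp u \<zeta>" for g
  proof -
    have "\<psi> g *v (u *v v) = u *v (\<psi> g *v v)" for v
    proof -
      define b where "b l = (case l of 0 \<Rightarrow> 0 | Suc l' \<Rightarrow> c l' v)" for l
      have e1: "(\<Sum>l<Suc N. mpow u l *v (S *v c l (u *v v))) = u *v v"
        using dec[of "u *v v"] uN[of N] unfolding N_def by simp
      have e2: "(\<Sum>l<Suc N. mpow u l *v (S *v b l)) = u *v v"
        unfolding sum.lessThan_Suc_shift using dec[of v]
        by (simp add: b_def mpow_Suc_v vec.sum[symmetric])
      have "(\<Sum>l<Suc N. mpow u l *v (S *v (g *v c l (u *v v)))) = (\<Sum>l<Suc N. mpow u l *v (S *v (g *v b l)))"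
        by (rule wd'[OF g]) (simp only: e1 e2)
      moreover have "(\<Sum>l<Suc N. mpow u l *v (S *v (g *v c l (u *v v)))) = \<psi> g *v (u *v v)"
        unfolding \<psi>v using uN[of N] unfolding N_def by simp
      moreover have "(\<Sum>l<Suc N. mpow u l *v (S *v (g *v b l))) = u *v (\<psi> g *v v)"
        unfolding \<psi>v sum.lessThan_Suc_shift by (simp add: b_def mpow_Suc_v vec.sum)
      ultimately show ?thesis by simp
    qed
    then show ?thesis by (simp add: matrix_eq matrix_vector_mul_assoc)
  qed
  have Pinv: "matrix_inv g \<in> Pgrp u \<zeta> \<and> g ** matrix_inv g = mat 1 \<and> matrix_inv g ** g = mat 1"
    if g: "g \<in> Pgrp u \<zeta>" for g
  proof -
    have inv: "g ** matrix_inv g = mat 1 \<and> matrix_inv g ** g = mat 1"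
    proof -
      have "\<exists>A'. g ** A' = mat 1 \<and> A' ** g = mat 1" using g unfolding Pgrp_def invertible_def by auto
      then show ?thesis unfolding matrix_inv_def by (rule someI_ex)
    qed
    define g' where "g' = matrix_inv g"
    have gg': "g *v (g' *v x) = x" "g' *v (g *v x) = x" for x
      using inv unfolding g'_def by (simp_all add: matrix_vector_mul_assoc)
    have "invertible g'" unfolding invertible_def using inv unfolding g'_def by blast
    moreover have "(*v) g' ` Wq u \<zeta> q = Wq u \<zeta> q" for q
    proof
      have eq: "(*v) g ` Wq u \<zeta> q = Wq u \<zeta> q" using g unfolding Pgrp_def by auto
      show "(*v) g' ` Wq u \<zeta> q \<subseteq> Wq u \<zeta> q"
      proof
        fix y assume "y \<in> (*v) g' ` Wq u \<zeta> q"
        then obtain w where w: "w \<in> Wq u \<zeta> q" "y = g' *v w" by auto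
        then obtain x where "x \<in> Wq u \<zeta> q" "w = g *v x" using eq by blast
        then show "y \<in> Wq u \<zeta> q" using w gg' by simp
      qed
      show "Wq u \<zeta> q \<subseteq> (*v) g' ` Wq u \<zeta> q"
      proof
        fix w assume "w \<in> Wq u \<zeta> q"
        then have "g *v w \<in> Wq u \<zeta> q" using eq by blast
        moreover have "w = g' *v (g *v w)" using gg' by simp
        ultimately show "w \<in> (*v) g' ` Wq u \<zeta> q" by blast
      qed
    qed
    ultimately show ?thesis using inv unfolding g'_def Pgrp_def by auto
  qed
  have cent: "\<psi> g \<in> centralizer u" if g: "g \<in> Pgrp u \<zeta>" for g
  proof -
    have "\<psi> g ** \<psi> (matrix_inv g) = mat 1" using hom[OF g] Pinv[OF g] one by simp
    moreover have "\<psi> (matrix_inv g) ** \<psi> g = mat 1"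
      using hom[of "matrix_inv g" g] Pinv[OF g] one by simp
    ultimately have "invertible (\<psi> g)" unfolding invertible_def by blast
    then show ?thesis unfolding centralizer_def using comm[OF g] by simp
  qed
  have reg: "regular_on (Pgrp u \<zeta>) \<psi>"
    unfolding regular_on_def
  proof (intro allI)
    fix i j
    define p where "p = (\<lambda>g::complex^'m^'m. \<Sum>l<N. \<Sum>k\<in>UNIV. (\<Sum>a\<in>UNIV. P l $ i $ a * g $ a $ k) * Q l $ k $ j)"
    have "p \<in> polyfun" unfolding p_def
      by (intro pf_sum pf_mult pf_const pf_coord finite_lessThan) simp_all
    moreover have "\<psi> g $ i $ j = p g / det g ^ 0" for g
      by (simp add: \<psi>_def p_def matrix_matrix_mult_def)
    ultimately show "\<exists>p\<in>polyfun. \<exists>k::nat. \<forall>g\<in>Pgrp u \<zeta>. \<psi> g $ i $ j = p g / det g ^ k" by blast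
  qed
  have ZS1: "\<zeta> ** S = mat 1" by (simp add: matrix_eq ZS matrix_vector_mul_assoc[symmetric])
  have ind: "induced_map \<zeta> (\<psi> g) = g" for g
  proof -
    have "\<zeta> *v (\<psi> g *v v) = g *v (\<zeta> *v v)" for v
      unfolding \<psi>v N_def sum.lessThan_Suc_shift
      by (simp add: vec.sum mpow_Suc_v Zu matrix_vector_right_distrib ZS c_def)
    then have eq: "g ** \<zeta> = \<zeta> ** \<psi> g" by (simp add: matrix_eq matrix_vector_mul_assoc[symmetric])
    show ?thesis unfolding induced_map_def
    proof (rule the_equality)
      show "g ** \<zeta> = \<zeta> ** \<psi> g" by (rule eq)
    next
      fix h assume "h ** \<zeta> = \<zeta> ** \<psi> g"
      then have "h ** \<zeta> = g ** \<zeta>" using eq by simp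
      then have "(h ** \<zeta>) ** S = (g ** \<zeta>) ** S" by simp
      then show "h = g" by (simp add: matrix_mul_assoc[symmetric] ZS1)
    qed
  qed
  show ?thesis
    by (rule exI[of _ \<psi>]) (simp add: alg_group_hom_def cent hom reg ind)
qed

end
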